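(* Let $X$ be an infinite dimensional separable Banach space, let $T$ be a bounded linear operator on $X$ and let $\varepsilon\in(0,1)$. Let $\mathcal{D}_1$ be a dense subset of $X$. Let $\mathcal{D}_2$ be a subset of $X$ such that $\mathcal{D}_2\cap B(x,\varepsilon\|x\|)\neq\emptyset$ for all $x\in X\setminus\{0\}$. Let $(n(k))_k\subset\mathbb{N}$ be an increasing sequence and let $S_{n(k)}:\mathcal{D}_2\to X$ be maps such that: (1) $\lim_{k\to\infty}\|T^{n(k)}x\|=0$ for all $x\in\mathcal{D}_1$; (2) $\lim_{k\to\infty}\|S_{n(k)}y\|=0$ for all $y\in\mathcal{D}_2$; (3) $\lim_{k\to\infty}\|T^{n(k)}S_{n(k)}y-y\|=0$ for all $y\in\mathcal{D}_2$. Then $T$ satisfies the Hypercyclicity Criterion.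
   Context: $B(x,r)$ is the closed ball of center $x$ and radius $r$. $T$ satisfies the Hypercyclicity Criterion if there exist a sequence of integers $(m(k))_k$, two dense sets $\mathcal{E}_1,\mathcal{E}_2\subset X$ and maps $U_{m(k)}:\mathcal{E}_2\to X$ such that $T^{m(k)}x\to0$ for all $x\in\mathcal{E}_1$, $U_{m(k)}y\to0$ and $T^{m(k)}U_{m(k)}y\to y$ for all $y\in\mathcal{E}_2$. *)

theory Defs
  imports "HOL-Analysis.Analysis"
begin

definition infinite_dimensional :: "'a::real_vector itself \<Rightarrow> bool" where
  "infinite_dimensional _ \<longleftrightarrow> \<not> (\<exists>B::'a set. finite B \<and> span B = UNIV)"

definition satisfies_HC :: "('a::real_normed_vector \<Rightarrow> 'a) \<Rightarrow> bool" where
  "satisfies_HC T \<longleftrightarrow>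
     (\<exists>(m::nat \<Rightarrow> nat) (E1::'a set) (E2::'a set) (U::nat \<Rightarrow> 'a \<Rightarrow> 'a).
        closure E1 = UNIV \<and> closure E2 = UNIV \<and>
        (\<forall>x\<in>E1. (\<lambda>k. (T ^^ m k) x) \<longlonglongrightarrow> 0) \<and>
        (\<forall>y\<in>E2. (\<lambda>k. U (m k) y) \<longlonglongrightarrow> 0) \<and>
        (\<forall>y\<in>E2. (\<lambda>k. (T ^^ m k) (U (m k) y)) \<longlonglongrightarrow> y))"

end

theory Submission
  imports Defs
begin

lemma funpow_add_lin:
  fixes T :: "'a::real_normed_vector \<Rightarrow> 'a"
  assumes "bounded_linear T"
  shows "(T ^^ m) (x + y) = (T ^^ m) x + (T ^^ m) y"
proof (induction m)
  case 0 then show ?case by (simp add: funpow_0)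
next
  case (Suc m) then show ?case using linear_add[OF bounded_linear.linear[OF assms]] by simp
qed

lemma funpow_zero_lin:
  fixes T :: "'a::real_normed_vector \<Rightarrow> 'a"
  assumes "bounded_linear T"
  shows "(T ^^ m) 0 = 0"
  by (induction m) (simp_all add: linear_0[OF bounded_linear.linear[OF assms]])

lemma funpow_sum_list:
  fixes T :: "'a::real_normed_vector \<Rightarrow> 'a"
  assumes "bounded_linear T"
  shows "(T ^^ m) (sum_list (map f ds)) = sum_list (map (\<lambda>d. (T ^^ m) (f d)) ds)"
  by (induction ds) (simp_all add: funpow_add_lin[OF assms] funpow_zero_lin[OF assms])

lemma tendsto_sum_list_map:
  assumes "\<forall>d\<in>set ds. (\<lambda>k. f k d) \<longlonglongrightarrow> g d"
  shows "(\<lambda>k. sum_list (map (f k) ds)) \<longlonglongrightarrow> (sum_list (map g ds) :: 'a::real_normed_vector)"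
  using assms by (induction ds) (auto intro: tendsto_add)

lemma approx_lists:
  fixes D2 :: "'a::real_normed_vector set"
  assumes "0 \<le> \<epsilon>" and "\<forall>x. x \<noteq> 0 \<longrightarrow> D2 \<inter> cball x (\<epsilon> * norm x) \<noteq> {}"
  shows "\<exists>ds. set ds \<subseteq> D2 \<and> norm (y - sum_list ds) \<le> \<epsilon> ^ N * norm y"
proof (induction N arbitrary: y)
  case 0 show ?case by (intro exI[of _ "[]"]) simp
next
  case (Suc N)
  show ?case
  proof (cases "y = 0")
    case True then show ?thesis by (intro exI[of _ "[]"]) simp
  next
    case False
    then obtain d where "d \<in> D2 \<inter> cball y (\<epsilon> * norm y)"
      using assms(2) by blast
    then have d: "d \<in> D2" "norm (y - d) \<le> \<epsilon> * norm y"
      by (auto simp: dist_norm)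
    obtain ds where ds: "set ds \<subseteq> D2" "norm ((y - d) - sum_list ds) \<le> \<epsilon> ^ N * norm (y - d)"
      using Suc.IH by blast
    have "\<epsilon> ^ N * norm (y - d) \<le> \<epsilon> ^ N * (\<epsilon> * norm y)"
      using d(2) assms(1) by (simp add: mult_left_mono)
    then have "norm (y - sum_list (d # ds)) \<le> \<epsilon> ^ Suc N * norm y"
      using ds(2) by (simp add: algebra_simps)
    then show ?thesis using d(1) ds(1) by (intro exI[of _ "d # ds"]) auto
  qed
qed

theorem proposition5p1:
  fixes T :: "'a::banach \<Rightarrow> 'a"
    and \<epsilon> :: real
    and D1 D2 :: "'a set"
    and n :: "nat \<Rightarrow> nat"
    and S :: "nat \<Rightarrow> 'a \<Rightarrow> 'a"
  assumes "infinite_dimensional TYPE('a)"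
    and "separable_space (euclidean :: 'a topology)"
    and "bounded_linear T"
    and "0 < \<epsilon>" and "\<epsilon> < 1"
    and "closure D1 = UNIV"
    and "\<forall>x. x \<noteq> 0 \<longrightarrow> D2 \<inter> cball x (\<epsilon> * norm x) \<noteq> {}"
    and "strict_mono n"
    and "\<forall>x\<in>D1. (\<lambda>k. norm ((T ^^ n k) x)) \<longlonglongrightarrow> 0"
    and "\<forall>y\<in>D2. (\<lambda>k. norm (S (n k) y)) \<longlonglongrightarrow> 0"
    and "\<forall>y\<in>D2. (\<lambda>k. norm ((T ^^ n k) (S (n k) y) - y)) \<longlonglongrightarrow> 0"
  shows "satisfies_HC T"
proof -
  define E2 where "E2 = {sum_list ds | ds. set ds \<subseteq> D2}"
  define R where "R = (\<lambda>y. SOME ds. set ds \<subseteq> D2 \<and> sum_list ds = y)"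
  define U where "U = (\<lambda>j y. sum_list (map (S j) (R y)))"
  have R: "set (R y) \<subseteq> D2 \<and> sum_list (R y) = y" if "y \<in> E2" for y
    unfolding R_def by (rule someI_ex) (use that E2_def in auto)
  have dense2: "closure E2 = UNIV"
  proof -
    have "x \<in> closure E2" for x
    proof (unfold closure_approachable, intro allI impI)
      fix e :: real assume e: "e > 0"
      have "0 < e / (norm x + 1)" using e by (simp add: add_nonneg_pos)
      then obtain N where N: "\<epsilon> ^ N < e / (norm x + 1)"
        using real_arch_pow_inv[of "e / (norm x + 1)" \<epsilon>] assms(5) by auto
      obtain ds where ds: "set ds \<subseteq> D2" "norm (x - sum_list ds) \<le> \<epsilon> ^ N * norm x"
        using approx_lists[of \<epsilon> D2 x N] assms(4,7) by auto
      have "\<epsilon> ^ N * norm x \<le> \<epsilon> ^ N * (norm x + 1)"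
        using assms(4) by (simp add: mult_left_mono)
      also have "\<dots> < e"
      proof -
        have p: "0 < norm x + 1" by (simp add: add_nonneg_pos)
        have "\<epsilon> ^ N * (norm x + 1) < e / (norm x + 1) * (norm x + 1)"
          using N p by (rule mult_strict_right_mono)
        then show ?thesis using p by simp
      qed
      finally have "dist (sum_list ds) x < e" using ds(2) by (simp add: dist_norm norm_minus_commute)
      then show "\<exists>y\<in>E2. dist y x < e" using ds(1) unfolding E2_def by blast
    qed
    then show ?thesis by auto
  qed
  have c1: "\<forall>x\<in>D1. (\<lambda>k. (T ^^ n k) x) \<longlonglongrightarrow> 0"
    using assms(9) tendsto_norm_zero_iff by blast
  have sd: "(\<lambda>k. S (n k) d) \<longlonglongrightarrow> 0" if "d \<in> D2" for d
    using assms(10) that tendsto_norm_zero_iff by blast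
  have td: "(\<lambda>k. (T ^^ n k) (S (n k) d)) \<longlonglongrightarrow> d" if "d \<in> D2" for d
  proof -
    have "(\<lambda>k. (T ^^ n k) (S (n k) d) - d) \<longlonglongrightarrow> 0"
      using assms(11) that tendsto_norm_zero_iff by blast
    then show ?thesis using Lim_null by blast
  qed
  have c2: "\<forall>y\<in>E2. (\<lambda>k. U (n k) y) \<longlonglongrightarrow> 0"
  proof
    fix y assume y: "y \<in> E2"
    have "(\<lambda>k. sum_list (map (S (n k)) (R y))) \<longlonglongrightarrow> sum_list (map (\<lambda>_. 0::'a) (R y))"
      by (rule tendsto_sum_list_map) (use R[OF y] sd in auto)
    then show "(\<lambda>k. U (n k) y) \<longlonglongrightarrow> 0" unfolding U_def by simp
  qed
  have c3: "\<forall>y\<in>E2. (\<lambda>k. (T ^^ n k) (U (n k) y)) \<longlonglongrightarrow> y"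
  proof
    fix y assume y: "y \<in> E2"
    have "(\<lambda>k. sum_list (map (\<lambda>d. (T ^^ n k) (S (n k) d)) (R y))) \<longlonglongrightarrow> sum_list (map (\<lambda>d. d) (R y))"
      by (rule tendsto_sum_list_map) (use R[OF y] td in auto)
    then show "(\<lambda>k. (T ^^ n k) (U (n k) y)) \<longlonglongrightarrow> y"
      unfolding U_def using R[OF y] by (simp add: funpow_sum_list[OF assms(3)])
  qed
  show ?thesis unfolding satisfies_HC_def
    using assms(6) dense2 c1 c2 c3 by blast
qed

end
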